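(* Let $B^n$ be the open unit ball of $\mathbb{R}^n$, let $f\colon[0,1)\to[0,\infty)$ with $f(0)=1$, and suppose $\rho_M(x,y)=\dfrac{|x-y|}{f(|x|)f(|y|)}$ is a metric on $B^n$. Then $\rho_M(g(x),g(y))=\rho_M(x,y)$ for all $x,y\in B^n$ and all $g\in GM(B^n)$ if and only if $f(x)=\sqrt{1-x^2}$ for all $x\in[0,1)$.
   Context: $GM(B^n)$ denotes the group of Möbius transformations of $\overline{\mathbb{R}^n}=\mathbb{R}^n\cup\{\infty\}$ mapping $B^n$ onto itself. Convention $0/0=0$. *)

theory Defs
  imports "HOL-Analysis.Analysis"
begin

text \<open>The one-point compactification of R^n is modelled as 'a option,
  with None standing for the point at infinity.\<close>

definition hyperplane_reflection :: "'a::euclidean_space \<Rightarrow> real \<Rightarrow> 'a option \<Rightarrow> 'a option" where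
  "hyperplane_reflection a t p =
     (case p of None \<Rightarrow> None
      | Some x \<Rightarrow> Some (x - (2 * (inner a x - t) / (norm a)\<^sup>2) *\<^sub>R a))"

definition sphere_inversion :: "'a::euclidean_space \<Rightarrow> real \<Rightarrow> 'a option \<Rightarrow> 'a option" where
  "sphere_inversion c r p =
     (case p of None \<Rightarrow> Some c
      | Some x \<Rightarrow> (if x = c then None
                   else Some (c + (r\<^sup>2 / (norm (x - c))\<^sup>2) *\<^sub>R (x - c))))"

inductive mobius :: "('a::euclidean_space option \<Rightarrow> 'a option) \<Rightarrow> bool" where
  mobius_id: "mobius id"
| mobius_refl: "mobius g \<Longrightarrow> a \<noteq> 0 \<Longrightarrow> mobius (hyperplane_reflection a t \<circ> g)"
| mobius_inv: "mobius g \<Longrightarrow> r > 0 \<Longrightarrow> mobius (sphere_inversion c r \<circ> g)"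

definition GM_ball :: "('a::euclidean_space option \<Rightarrow> 'a option) set" where
  "GM_ball = {g. mobius g \<and> g ` (Some ` ball 0 1) = Some ` ball (0::'a) 1}"

definition rho_M :: "(real \<Rightarrow> real) \<Rightarrow> 'a::real_normed_vector \<Rightarrow> 'a \<Rightarrow> real" where
  "rho_M f x y = norm (x - y) / (f (norm x) * f (norm y))"

definition is_metric_on :: "'a set \<Rightarrow> ('a \<Rightarrow> 'a \<Rightarrow> real) \<Rightarrow> bool" where
  "is_metric_on S d \<longleftrightarrow>
     (\<forall>x\<in>S. \<forall>y\<in>S. d x y \<ge> 0 \<and> (d x y = 0 \<longleftrightarrow> x = y) \<and> d x y = d y x) \<and>
     (\<forall>x\<in>S. \<forall>y\<in>S. \<forall>z\<in>S. d x z \<le> d x y + d y z)"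

end

theory Submission
  imports Defs
begin

definition LB :: "('a::euclidean_space \<times> real \<times> real) \<Rightarrow> ('a \<times> real \<times> real) \<Rightarrow> real" where
  "LB u v = inner (fst u) (fst v) - (fst (snd u) * snd (snd v) + fst (snd v) * snd (snd u)) / 2"

lemma LB_sym: "LB u v = LB v u" by (simp add: LB_def inner_commute algebra_simps)
lemma LB_diff_left: "LB (u - v) w = LB u w - LB v w" by (simp add: LB_def inner_diff_left field_simps)
lemma LB_diff_right: "LB w (u - v) = LB w u - LB w v" by (simp add: LB_def inner_diff_right field_simps)
lemma LB_scale_left: "LB (s *\<^sub>R u) w = s * LB u w" by (simp add: LB_def algebra_simps)
lemma LB_scale_right: "LB w (s *\<^sub>R u) = s * LB w u" by (simp add: LB_def algebra_simps)

definition PL :: "'a::euclidean_space option \<Rightarrow> 'a \<times> real \<times> real" where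
  "PL p = (case p of None \<Rightarrow> (0, 1, 0) | Some x \<Rightarrow> (x, (norm x)\<^sup>2, 1))"

definition reflL :: "('a::euclidean_space \<times> real \<times> real) \<Rightarrow> ('a \<times> real \<times> real) \<Rightarrow> ('a \<times> real \<times> real)" where
  "reflL h v = v - (2 * LB v h / LB h h) *\<^sub>R h"

lemma reflL_expand: "LB (reflL h u) (reflL h v) = LB u v - (2 * LB v h / LB h h) * LB u h
   - (2 * LB u h / LB h h) * LB v h + (2 * LB u h / LB h h) * (2 * LB v h / LB h h) * LB h h"
  unfolding reflL_def LB_diff_left LB_diff_right LB_scale_left LB_scale_right
  by (simp only: LB_sym[of h v] ring_distribs diff_diff_eq2 add_diff_eq diff_add_eq, simp add: algebra_simps)

lemma reflL_pres: "LB h h \<noteq> 0 \<Longrightarrow> LB (reflL h u) (reflL h v) = LB u v"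
  unfolding reflL_expand
proof -
  assume H: "LB h h \<noteq> 0"
  define A where "A = LB u h"
  define C where "C = LB v h"
  define K where "K = LB h h"
  have "LB u v - 2 * C / K * A - 2 * A / K * C + 2 * A / K * (2 * C / K) * K = LB u v"
    using H unfolding K_def by (simp add: field_simps)
  then show "LB u v - 2 * LB v h / LB h h * LB u h - 2 * LB u h / LB h h * LB v h +
    2 * LB u h / LB h h * (2 * LB v h / LB h h) * LB h h = LB u v"
    unfolding A_def C_def K_def .
qed

lemma reflL_adj: "LB (reflL h u) v = LB u (reflL h v)"
  unfolding reflL_def LB_diff_left LB_diff_right LB_scale_left LB_scale_right
  unfolding LB_sym[of h v] by (simp add: algebra_simps)

lemma reflL_scale: "reflL h (s *\<^sub>R v) = s *\<^sub>R reflL h v"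
  unfolding reflL_def LB_scale_left by (simp add: algebra_simps)

lemma LB_PL_Some: "LB (PL (Some x)) (PL (Some y)) = - (norm (x - y))\<^sup>2 / 2"
  by (simp add: LB_def PL_def power2_norm_eq_inner inner_diff_left inner_diff_right inner_commute algebra_simps)

lemma LB_PL_eq0: "LB (PL p) (PL q) = 0 \<longleftrightarrow> p = q"
proof (cases p; cases q)
  fix x y assume "p = Some x" "q = Some y" then show ?thesis by (simp add: LB_PL_Some)
qed (auto simp: LB_def PL_def)

lemma LB_PL_S: "2 * LB (PL (Some x)) (0, -1, 1) = 1 - (norm x)\<^sup>2"
  by (simp add: LB_def PL_def field_simps)
lemma LB_PL_S_None: "2 * LB (PL None) (0, -1, 1) = -1"
  by (simp add: LB_def PL_def)

definition good :: "('a::euclidean_space option \<Rightarrow> 'a option) \<Rightarrow> bool" where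
 "good g \<longleftrightarrow> (\<exists>M N \<beta>. (\<forall>u v. LB (M u) (M v) = LB u v) \<and> (\<forall>u v. LB (M u) v = LB u (N v))
    \<and> (\<forall>u v. LB (N u) (N v) = LB u v) \<and> (\<forall>p. \<beta> p > 0 \<and> M (PL p) = \<beta> p *\<^sub>R PL (g p)))"

lemma good_step:
  assumes "good g" "LB h h \<noteq> 0" "\<And>q. \<gamma> q > 0" "\<And>q. reflL h (PL q) = \<gamma> q *\<^sub>R PL (G q)"
  shows "good (G \<circ> g)"
proof -
  obtain M N \<beta> where M: "\<forall>u v. LB (M u) (M v) = LB u v" "\<forall>u v. LB (M u) v = LB u (N v)"
    "\<forall>u v. LB (N u) (N v) = LB u v" "\<forall>p. \<beta> p > 0 \<and> M (PL p) = \<beta> p *\<^sub>R PL (g p)"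
    using assms(1) unfolding good_def by blast
  have 1: "LB ((reflL h \<circ> M) u) ((reflL h \<circ> M) v) = LB u v" for u v
    unfolding o_def reflL_pres[OF assms(2)] using M(1) by blast
  have 2: "LB ((reflL h \<circ> M) u) v = LB u ((N \<circ> reflL h) v)" for u v
    unfolding o_def reflL_adj using M(2) by blast
  have 3: "LB ((N \<circ> reflL h) u) ((N \<circ> reflL h) v) = LB u v" for u v
  proof -
    have "LB ((N \<circ> reflL h) u) ((N \<circ> reflL h) v) = LB (reflL h u) (reflL h v)"
      unfolding o_def using M(3) by blast
    also have "\<dots> = LB u v" by (rule reflL_pres[OF assms(2)])
    finally show ?thesis .
  qed
  have 4: "(\<gamma> (g p) * \<beta> p) > 0 \<and> (reflL h \<circ> M) (PL p) = (\<gamma> (g p) * \<beta> p) *\<^sub>R PL ((G \<circ> g) p)" for p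
    using M(4) assms(3,4) by (simp add: reflL_scale)
  show ?thesis unfolding good_def
    apply (rule exI[of _ "reflL h \<circ> M"])
    apply (rule exI[of _ "N \<circ> reflL h"])
    apply (rule exI[of _ "\<lambda>p. \<gamma> (g p) * \<beta> p"])
    using 1 2 3 4 by blast
qed

lemma hr_gen:
  assumes "a \<noteq> 0"
  shows "reflL (a, 2 * t, 0) (PL q) = 1 *\<^sub>R PL (hyperplane_reflection a t q)"
proof (cases q)
  case None
  then show ?thesis by (simp add: reflL_def LB_def PL_def hyperplane_reflection_def)
next
  case (Some x)
  define k where "k = 2 * (inner a x - t) / (norm a)\<^sup>2"
  have na: "(norm a)\<^sup>2 \<noteq> 0" using assms by simp
  have e1: "2 * LB (PL (Some x)) (a, 2 * t, 0) / LB (a, 2 * t, 0) (a, 2 * t, 0) = k"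
    by (simp add: k_def LB_def PL_def power2_norm_eq_inner inner_commute)
  have kk: "k * (norm a)\<^sup>2 = 2 * (inner a x - t)" using na by (simp add: k_def)
  have "(norm (x - k *\<^sub>R a))\<^sup>2 = (norm x)\<^sup>2 - 2 * k * inner a x + k * (k * (norm a)\<^sup>2)"
    by (simp add: power2_norm_eq_inner inner_diff_left inner_diff_right inner_commute algebra_simps)
  also have "\<dots> = (norm x)\<^sup>2 - k * (2 * t)" unfolding kk by (simp add: algebra_simps)
  finally have nn: "(norm (x - k *\<^sub>R a))\<^sup>2 = (norm x)\<^sup>2 - k * (2 * t)" .
  have r: "reflL (a, 2 * t, 0) (PL q) = (x - k *\<^sub>R a, (norm x)\<^sup>2 - k * (2 * t), 1)"
    unfolding reflL_def e1 Some by (simp add: PL_def)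
  have h: "hyperplane_reflection a t q = Some (x - k *\<^sub>R a)"
    unfolding Some hyperplane_reflection_def k_def by simp
  show ?thesis unfolding r h by (simp add: PL_def nn)
qed

lemma norm_aff: "(norm (c + k *\<^sub>R v))\<^sup>2 = inner c c + 2 * k * inner v c + k\<^sup>2 * (norm v)\<^sup>2"
  unfolding power2_norm_eq_inner by (simp add: inner_add_left inner_add_right inner_commute algebra_simps power2_eq_square)

lemma v2_alg:
  fixes d r X C XC :: real
  assumes "d > 0" "r > 0" "X = d + 2 * XC - C"
  shows "X - (- (d - r\<^sup>2) / r\<^sup>2) * (C - r\<^sup>2) = (d / r\<^sup>2) * (C + 2 * (r\<^sup>2 / d) * (XC - C) + (r\<^sup>2 / d)\<^sup>2 * d)"
  using assms(1,2) unfolding assms(3) by (simp add: field_simps power2_eq_square)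

definition si_beta :: "'a::euclidean_space \<Rightarrow> real \<Rightarrow> 'a option \<Rightarrow> real" where
  "si_beta c r q = (case q of None \<Rightarrow> 1 / r\<^sup>2 | Some x \<Rightarrow> (if x = c then r\<^sup>2 else (norm (x - c))\<^sup>2 / r\<^sup>2))"

lemma si_beta_pos: "r > 0 \<Longrightarrow> si_beta c r q > 0"
  by (cases q) (auto simp: si_beta_def)

lemma si_gen:
  assumes r: "r > 0"
  shows "reflL (c, (norm c)\<^sup>2 - r\<^sup>2, 1) (PL q) = si_beta c r q *\<^sub>R PL (sphere_inversion c r q)"
proof -
  have hh: "LB (c, (norm c)\<^sup>2 - r\<^sup>2, 1) (c, (norm c)\<^sup>2 - r\<^sup>2, 1) = r\<^sup>2"
    by (simp add: LB_def power2_norm_eq_inner field_simps)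
  show ?thesis
  proof (cases q)
    case None
    then show ?thesis using r unfolding reflL_def hh
      by (simp add: LB_def PL_def sphere_inversion_def si_beta_def prod_eq_iff field_simps)
  next
    case (Some x)
    show ?thesis
    proof (cases "x = c")
      case True
      then show ?thesis using r Some unfolding reflL_def hh
        by (simp add: LB_def PL_def sphere_inversion_def si_beta_def prod_eq_iff field_simps power2_norm_eq_inner)
    next
      case False
      define d where "d = (norm (x - c))\<^sup>2"
      have dpos: "d > 0" using False by (simp add: d_def)
      have dd: "d = inner x x - 2 * inner x c + inner c c"
        by (simp add: d_def power2_norm_eq_inner inner_diff_left inner_diff_right inner_commute)
      have lb: "2 * LB (PL (Some x)) (c, (norm c)\<^sup>2 - r\<^sup>2, 1) / r\<^sup>2 = - (d - r\<^sup>2) / r\<^sup>2"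
        using r by (simp add: LB_def PL_def dd power2_norm_eq_inner field_simps)
      have s1: "- (d - r\<^sup>2) / r\<^sup>2 = 1 - d / r\<^sup>2" using r by (simp add: field_simps)
      have s2: "(d / r\<^sup>2) * (r\<^sup>2 / d) = 1" using r dpos by simp
      have v1: "x - (- (d - r\<^sup>2) / r\<^sup>2) *\<^sub>R c = (d / r\<^sup>2) *\<^sub>R (c + (r\<^sup>2 / d) *\<^sub>R (x - c))"
        unfolding s1 scaleR_add_right scaleR_scaleR s2 by (simp add: scaleR_diff_left algebra_simps)
      have v2: "(norm x)\<^sup>2 - (- (d - r\<^sup>2) / r\<^sup>2) * ((norm c)\<^sup>2 - r\<^sup>2)
          = (d / r\<^sup>2) * (norm (c + (r\<^sup>2 / d) *\<^sub>R (x - c)))\<^sup>2"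
      proof -
        have n1: "(norm (c + (r\<^sup>2 / d) *\<^sub>R (x - c)))\<^sup>2 = (norm c)\<^sup>2 + 2 * (r\<^sup>2 / d) * (inner x c - (norm c)\<^sup>2) + (r\<^sup>2 / d)\<^sup>2 * d"
          using norm_aff[of c "r\<^sup>2 / d" "x - c"] unfolding d_def[symmetric]
          by (simp add: inner_diff_left power2_norm_eq_inner)
        have X: "(norm x)\<^sup>2 = d + 2 * inner x c - (norm c)\<^sup>2"
          using dd by (simp add: power2_norm_eq_inner)
        show ?thesis unfolding n1 by (rule v2_alg[OF dpos r X])
      qed
      have v3: "1 - (- (d - r\<^sup>2) / r\<^sup>2) * 1 = (d / r\<^sup>2) * 1" using r by (simp add: field_simps)
      have r1: "reflL (c, (norm c)\<^sup>2 - r\<^sup>2, 1) (PL q) = (x - (- (d - r\<^sup>2) / r\<^sup>2) *\<^sub>R c,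
          (norm x)\<^sup>2 - (- (d - r\<^sup>2) / r\<^sup>2) * ((norm c)\<^sup>2 - r\<^sup>2), 1 - (- (d - r\<^sup>2) / r\<^sup>2) * 1)"
      proof -
        have "reflL (c, (norm c)\<^sup>2 - r\<^sup>2, 1) (PL q) = PL (Some x) - (- (d - r\<^sup>2) / r\<^sup>2) *\<^sub>R (c, (norm c)\<^sup>2 - r\<^sup>2, 1)"
          unfolding reflL_def hh Some lb ..
        then show ?thesis by (simp add: PL_def)
      qed
      have rhs: "si_beta c r q *\<^sub>R PL (sphere_inversion c r q) =
          ((d / r\<^sup>2) *\<^sub>R (c + (r\<^sup>2 / d) *\<^sub>R (x - c)), (d / r\<^sup>2) * (norm (c + (r\<^sup>2 / d) *\<^sub>R (x - c)))\<^sup>2, (d / r\<^sup>2) * 1)"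
        using Some False by (simp add: si_beta_def sphere_inversion_def PL_def d_def)
      show ?thesis unfolding r1 rhs v1 v2 v3 ..
    qed
  qed
qed

lemma mobius_good: "mobius g \<Longrightarrow> good g"
proof (induction rule: mobius.induct)
  case mobius_id
  show ?case unfolding good_def
    by (rule exI[of _ id], rule exI[of _ id], rule exI[of _ "\<lambda>p. 1"]) simp
next
  case (mobius_refl g a t)
  show ?case
    by (rule good_step[OF mobius_refl.IH _ _ hr_gen[OF mobius_refl.hyps(2)]])
       (use mobius_refl.hyps(2) in \<open>auto simp: LB_def\<close>)
next
  case (mobius_inv g r c)
  show ?case
    by (rule good_step[OF mobius_inv.IH _ _ si_gen[OF mobius_inv.hyps(2)]])
       (use mobius_inv.hyps(2) si_beta_pos in \<open>auto simp: LB_def power2_norm_eq_inner\<close>)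
qed


lemma pos_limit:
  fixes k c b :: real
  assumes "\<And>t. 0 \<le> t \<Longrightarrow> t < 1 \<Longrightarrow> 2*t*k - t^2*c - b > 0"
  shows "2*k - c - b \<ge> 0"
proof -
  have lim: "((\<lambda>t. 2*t*k - t^2*c - b) \<longlongrightarrow> 2*1*k - 1^2*c - b) (at_left (1::real))"
    by (intro tendsto_intros)
  have ev: "eventually (\<lambda>t. 0 \<le> 2*t*k - t^2*c - b) (at_left (1::real))"
  proof -
    have "eventually (\<lambda>t. t \<in> {0<..<1}) (at_left (1::real))"
      by (rule eventually_at_left_real) simp
    then show ?thesis
      by (rule eventually_mono) (use assms in \<open>auto intro: less_imp_le\<close>)
  qed
  have "0 \<le> 2*1*k - 1^2*c - b"
    by (rule tendsto_lowerbound[OF lim ev]) simp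
  then show ?thesis by simp
qed

lemma sq_lt1: "norm (u::'a::real_normed_vector) < 1 \<Longrightarrow> (norm u)\<^sup>2 < 1"
  using power_less_one_iff[of "norm u" 2] by simp

lemma sq_ge1: "norm (u::'a::real_normed_vector) \<ge> 1 \<Longrightarrow> (norm u)\<^sup>2 \<ge> 1"
  by (metis one_le_power)

lemma good_ball:
  fixes g :: "'a::euclidean_space option \<Rightarrow> 'a option"
  assumes "good g" and img: "g ` (Some ` ball 0 1) = Some ` ball 0 1"
  shows "\<exists>\<beta>. (\<forall>x. \<beta> x > 0) \<and> (\<forall>x x' y y'. g (Some x) = Some x' \<longrightarrow> g (Some y) = Some y' \<longrightarrow>
       (norm (x' - y'))\<^sup>2 = (norm (x - y))\<^sup>2 / (\<beta> x * \<beta> y) \<and> 1 - (norm x')\<^sup>2 = (1 - (norm x)\<^sup>2) / \<beta> x)"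
proof -
  obtain M N \<beta> where M: "\<forall>u v. LB (M u) (M v) = LB u v" "\<forall>u v. LB (M u) v = LB u (N v)"
    "\<forall>u v. LB (N u) (N v) = LB u v" "\<forall>p. \<beta> p > 0 \<and> M (PL p) = \<beta> p *\<^sub>R PL (g p)"
    using assms(1) unfolding good_def by blast
  define S :: "'a \<times> real \<times> real" where "S = (0, -1, 1)"
  define E where "E p = 2 * LB (PL p) S" for p
  have ES: "E (Some u) = 1 - (norm u)\<^sup>2" for u unfolding E_def S_def by (rule LB_PL_S)
  have EN: "E None = -1" unfolding E_def S_def by (rule LB_PL_S_None)
  have pairs: "LB (PL p) (PL q) = \<beta> p * \<beta> q * LB (PL (g p)) (PL (g q))" for p q
  proof -
    have "LB (PL p) (PL q) = LB (M (PL p)) (M (PL q))" using M(1) by metis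
    also have "\<dots> = \<beta> p * \<beta> q * LB (PL (g p)) (PL (g q))"
      using M(4) by (simp add: LB_scale_left LB_scale_right)
    finally show ?thesis .
  qed
  have inj: "p = q" if "g p = g q" for p q
  proof -
    have "LB (PL (g p)) (PL (g q)) = 0" unfolding LB_PL_eq0 by (rule that)
    then have "LB (PL p) (PL q) = 0" using pairs[of p q] by simp
    then show ?thesis using LB_PL_eq0 by blast
  qed
  have key: "2 * LB (PL p) (N S) = \<beta> p * E (g p)" for p
  proof -
    have "LB (PL p) (N S) = LB (M (PL p)) S" using M(2) by metis
    also have "\<dots> = \<beta> p * LB (PL (g p)) S" using M(4) by (simp add: LB_scale_left)
    finally show ?thesis by (simp add: E_def)
  qed
  have Ein: "E (g (Some z)) > 0" if "z \<in> ball 0 1" for z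
  proof -
    have "g (Some z) \<in> g ` (Some ` ball 0 1)" using that by simp
    then have "g (Some z) \<in> Some ` ball 0 1" unfolding img .
    then obtain u where u: "g (Some z) = Some u" "u \<in> ball 0 1" by blast
    then show ?thesis using sq_lt1[of u] by (simp add: ES)
  qed
  have Eout: "E (g (Some z)) \<le> 0" if "norm z \<ge> 1" for z
  proof (cases "g (Some z)")
    case None
    then show ?thesis by (simp add: EN)
  next
    case (Some u)
    have "u \<notin> ball 0 1"
    proof
      assume "u \<in> ball 0 1"
      then have "Some u \<in> g ` (Some ` ball 0 1)" unfolding img by simp
      then obtain v where v: "v \<in> ball 0 1" "g (Some v) = Some u" by force
      then have "g (Some z) = g (Some v)" using Some by simp
      then have "Some z = Some v" by (rule inj)
      then show False using v that by simp
    qed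
    then have "norm u \<ge> 1" by simp
    then show ?thesis using Some sq_ge1[of u] by (simp add: ES)
  qed
  obtain a b c where w: "N S = (a, b, c)" by (cases "N S") auto
  have phi: "2 * LB (PL (Some z)) (N S) = 2 * inner z a - (norm z)\<^sup>2 * c - b" for z
    unfolding w by (simp add: LB_def PL_def inner_commute field_simps)
  have pos: "2 * inner z a - (norm z)\<^sup>2 * c - b > 0" if "norm z < 1" for z
    using key[of "Some z"] Ein[of z] M(4) that unfolding phi by simp
  have nonpos: "2 * inner z a - (norm z)\<^sup>2 * c - b \<le> 0" if "norm z \<ge> 1" for z
    using key[of "Some z"] Eout[of z] M(4) that unfolding phi
    by (simp add: mult_nonneg_nonpos less_imp_le)
  have bneg: "b < 0" using pos[of 0] by simp
  have unit: "2 * inner e a - c - b = 0" if e: "norm e = 1" for e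
  proof -
    have "2 * inner e a - c - b \<ge> 0"
    proof (rule pos_limit)
      fix t :: real assume t: "0 \<le> t" "t < 1"
      have "2 * inner (t *\<^sub>R e) a - (norm (t *\<^sub>R e))\<^sup>2 * c - b > 0"
        using pos[of "t *\<^sub>R e"] t e by simp
      then show "2 * t * inner e a - t\<^sup>2 * c - b > 0" using t e by simp
    qed
    moreover have "2 * inner e a - c - b \<le> 0" using nonpos[of e] e by simp
    ultimately show ?thesis by linarith
  qed
  have a0: "a = 0"
  proof (rule ccontr)
    assume "a \<noteq> 0"
    define e where "e = (1 / norm a) *\<^sub>R a"
    have ne: "norm e = 1" "norm (-e) = 1" using \<open>a \<noteq> 0\<close> by (simp_all add: e_def)
    have "inner e a = norm a" using \<open>a \<noteq> 0\<close>
      by (simp add: e_def power2_norm_eq_inner[symmetric] power2_eq_square)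
    moreover have "norm a > 0" using \<open>a \<noteq> 0\<close> by simp
    moreover have "2 * inner e a - c - b = 0" "2 * inner (-e) a - c - b = 0"
      using unit[OF ne(1)] unit[OF ne(2)] by auto
    ultimately show False by (simp only: inner_minus_left)
  qed
  obtain e :: 'a where e: "norm e = 1" using vector_choose_size[of 1] by auto
  have cb: "c = - b" using unit[OF e] a0 by simp
  have "LB (N S) (N S) = LB S S" using M(3) by metis
  then have "LB (a, b, c) (a, b, c) = LB (0::'a, -1::real, 1::real) (0, -1, 1)" unfolding w by (simp add: S_def)
  then have "b * b = 1" unfolding a0 cb by (simp add: LB_def)
  then have "(b - 1) * (b + 1) = 0" by (simp add: algebra_simps)
  then have "b = -1" using bneg by auto
  then have NS: "N S = S" using w a0 cb by (simp add: S_def)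
  show ?thesis
  proof (intro exI[of _ "\<lambda>x. \<beta> (Some x)"] conjI allI impI)
    fix x show "\<beta> (Some x) > 0" using M(4) by simp
  next
    fix x x' y y' assume gx: "g (Some x) = Some x'" and gy: "g (Some y) = Some y'"
    have bx: "\<beta> (Some x) > 0" "\<beta> (Some y) > 0" using M(4) by auto
    have "- (norm (x - y))\<^sup>2 / 2 = \<beta> (Some x) * \<beta> (Some y) * (- (norm (x' - y'))\<^sup>2 / 2)"
      using pairs[of "Some x" "Some y"] gx gy by (simp add: LB_PL_Some)
    then show "(norm (x' - y'))\<^sup>2 = (norm (x - y))\<^sup>2 / (\<beta> (Some x) * \<beta> (Some y))"
      using bx by (simp add: field_simps)
    have "1 - (norm x)\<^sup>2 = \<beta> (Some x) * (1 - (norm x')\<^sup>2)"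
      using key[of "Some x"] gx unfolding NS by (simp add: ES E_def[symmetric])
    then show "1 - (norm x')\<^sup>2 = (1 - (norm x)\<^sup>2) / \<beta> (Some x)"
      using bx by (simp add: field_simps)
  qed
qed


lemma si_norm:
  fixes c x :: "'a::euclidean_space"
  assumes cr: "(norm c)\<^sup>2 = 1 + r\<^sup>2" and xc: "x \<noteq> c"
  shows "(norm (c + (r\<^sup>2 / (norm (x - c))\<^sup>2) *\<^sub>R (x - c)))\<^sup>2 - 1
          = (r\<^sup>2 / (norm (x - c))\<^sup>2) * ((norm x)\<^sup>2 - 1)"
proof -
  define d where "d = (norm (x - c))\<^sup>2"
  define k where "k = r\<^sup>2 / d"
  have dpos: "d > 0" using xc by (simp add: d_def)
  have kd: "k * d = r\<^sup>2" using dpos by (simp add: k_def)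
  have dd: "d = inner x x - 2 * inner x c + inner c c"
    by (simp add: d_def power2_norm_eq_inner inner_diff_left inner_diff_right inner_commute)
  have cc: "inner c c = 1 + r\<^sup>2" using cr by (simp add: power2_norm_eq_inner)
  have "(norm (c + k *\<^sub>R (x - c)))\<^sup>2 = inner c c + 2 * k * (inner x c - inner c c) + k * (k * d)"
    unfolding dd power2_norm_eq_inner
    by (simp add: inner_add_left inner_add_right inner_diff_left inner_diff_right inner_commute algebra_simps)
  also have "\<dots> - 1 = k * ((norm x)\<^sup>2 - 1)"
    unfolding kd unfolding power2_norm_eq_inner cc
    using kd[symmetric] unfolding dd cc by (simp add: algebra_simps)
  finally show ?thesis unfolding k_def d_def .
qed

lemma si_some:
  fixes c x :: "'a::euclidean_space"
  shows "x \<noteq> c \<Longrightarrow> sphere_inversion c r (Some x) = Some (c + (r\<^sup>2 / (norm (x - c))\<^sup>2) *\<^sub>R (x - c))"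
  by (simp add: sphere_inversion_def)

lemma si_invol:
  fixes c x :: "'a::euclidean_space"
  assumes r: "r > 0" and xc: "x \<noteq> c"
  defines "y \<equiv> c + (r\<^sup>2 / (norm (x - c))\<^sup>2) *\<^sub>R (x - c)"
  shows "y \<noteq> c" "c + (r\<^sup>2 / (norm (y - c))\<^sup>2) *\<^sub>R (y - c) = x"
proof -
  define d where "d = (norm (x - c))\<^sup>2"
  have dpos: "d > 0" using xc by (simp add: d_def)
  have yc: "y - c = (r\<^sup>2 / d) *\<^sub>R (x - c)" by (simp add: y_def d_def)
  show "y \<noteq> c" using yc r xc dpos by auto
  have nyc: "norm (y - c) = (r\<^sup>2 / d) * norm (x - c)" unfolding yc using dpos by simp
  have ny: "(norm (y - c))\<^sup>2 = (r\<^sup>2 / d)\<^sup>2 * d"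
    unfolding nyc power_mult_distrib d_def ..
  have "(r\<^sup>2 / (norm (y - c))\<^sup>2) * (r\<^sup>2 / d) = 1" unfolding ny using r dpos
    by (simp add: field_simps power2_eq_square)
  then show "c + (r\<^sup>2 / (norm (y - c))\<^sup>2) *\<^sub>R (y - c) = x"
    unfolding yc scaleR_scaleR by simp
qed

lemma si_ball:
  fixes c :: "'a::euclidean_space"
  assumes r: "r > 0" and cr: "(norm c)\<^sup>2 = 1 + r\<^sup>2"
  shows "sphere_inversion c r ` (Some ` ball 0 1) = Some ` ball 0 1"
proof -
  have nc: "norm c > 1"
  proof -
    have "(norm c)\<^sup>2 > 1" using cr r by simp
    show ?thesis
    proof (rule ccontr)
      assume "\<not> 1 < norm c"
      then have "(norm c)\<^sup>2 \<le> 1" by (intro power_le_one) auto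
      then show False using \<open>(norm c)\<^sup>2 > 1\<close> by simp
    qed
  qed
  have maps: "x \<noteq> c \<and> norm (c + (r\<^sup>2 / (norm (x - c))\<^sup>2) *\<^sub>R (x - c)) < 1" if "norm x < 1" for x :: 'a
  proof
    show xc: "x \<noteq> c" using that nc by auto
    have k0: "(r\<^sup>2 / (norm (x - c))\<^sup>2) > 0" using xc r by simp
    have x0: "(norm x)\<^sup>2 - 1 < 0" using sq_lt1[OF that] by simp
    have "(norm (c + (r\<^sup>2 / (norm (x - c))\<^sup>2) *\<^sub>R (x - c)))\<^sup>2 < 1"
      using si_norm[OF cr xc] mult_pos_neg[OF k0 x0] by linarith
    then show "norm (c + (r\<^sup>2 / (norm (x - c))\<^sup>2) *\<^sub>R (x - c)) < 1"
      using sq_ge1 not_less by blast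
  qed
  show ?thesis
  proof
    show "sphere_inversion c r ` Some ` ball 0 1 \<subseteq> Some ` ball 0 1"
      using maps by (auto simp: si_some)
    show "Some ` ball 0 1 \<subseteq> sphere_inversion c r ` Some ` ball 0 1"
    proof
      fix p assume "p \<in> Some ` ball (0::'a) 1"
      then obtain y where y: "p = Some y" "norm y < 1" by auto
      define x where "x = c + (r\<^sup>2 / (norm (y - c))\<^sup>2) *\<^sub>R (y - c)"
      have yc: "y \<noteq> c" and nx: "norm x < 1" using maps[OF y(2)] by (auto simp: x_def)
      have xc: "x \<noteq> c" and bk: "c + (r\<^sup>2 / (norm (x - c))\<^sup>2) *\<^sub>R (x - c) = y"
        using si_invol[OF r yc] unfolding x_def by auto
      have "sphere_inversion c r (Some x) = p" using xc bk y by (simp add: si_some)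
      then show "p \<in> sphere_inversion c r ` Some ` ball 0 1" using nx by force
    qed
  qed
qed

lemma si_line:
  fixes e :: "'a::euclidean_space"
  assumes e: "norm e = 1" and \<tau>: "\<tau> > 0" and u: "u \<noteq> 1 / \<tau>"
  shows "sphere_inversion ((1 / \<tau>) *\<^sub>R e) r (Some (u *\<^sub>R e)) = Some ((1 / \<tau> + r\<^sup>2 / (u - 1 / \<tau>)) *\<^sub>R e)"
proof -
  have d: "u *\<^sub>R e - (1 / \<tau>) *\<^sub>R e = (u - 1 / \<tau>) *\<^sub>R e" by (simp add: scaleR_diff_left)
  have ne: "u *\<^sub>R e \<noteq> (1 / \<tau>) *\<^sub>R e" using u e by (metis d eq_iff_diff_eq_0 norm_zero right_minus_eq scaleR_eq_0_iff zero_neq_one)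
  have n: "(norm ((u - 1 / \<tau>) *\<^sub>R e))\<^sup>2 = (u - 1 / \<tau>)\<^sup>2" using e by (simp add: power2_abs)
  have "(1 / \<tau>) *\<^sub>R e + (r\<^sup>2 / (u - 1 / \<tau>)\<^sup>2) *\<^sub>R ((u - 1 / \<tau>) *\<^sub>R e) = (1 / \<tau> + r\<^sup>2 / (u - 1 / \<tau>)) *\<^sub>R e"
    using u by (simp add: scaleR_add_left power2_eq_square)
  then show ?thesis using ne unfolding si_some[OF ne] d n by simp
qed


lemma tau_exists:
  fixes s :: real
  assumes "0 < s" "s < 1"
  shows "\<exists>\<tau>. 0 < \<tau> \<and> \<tau> < 1 \<and> s = 2 * \<tau> / (1 + \<tau>\<^sup>2) \<and> sqrt (1 - s\<^sup>2) = s / \<tau> - 1"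
proof -
  define q where "q = sqrt (1 - s\<^sup>2)"
  have s2: "s\<^sup>2 < 1" using assms by (simp add: power_less_one_iff)
  have q2: "q\<^sup>2 = 1 - s\<^sup>2" unfolding q_def by (rule real_sqrt_pow2) (use s2 in linarith)
  have q0: "q \<ge> 0" unfolding q_def by (rule real_sqrt_ge_zero) (use s2 in linarith)
  have q1: "q < 1" using assms by (simp add: q_def)
  have sq: "1 - s < q"
  proof -
    have "(1 - s)\<^sup>2 < q\<^sup>2" unfolding q2 using assms by (simp add: power2_eq_square algebra_simps)
    then show ?thesis using q0 by (rule power2_less_imp_less)
  qed
  define \<tau> where "\<tau> = (1 - q) / s"
  have t0: "0 < \<tau>" using q1 assms by (simp add: \<tau>_def)
  have t1: "\<tau> < 1" using sq assms by (simp add: \<tau>_def field_simps)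
  have "s * (1 + \<tau>\<^sup>2) = 2 * \<tau>"
  proof -
    have "s * (1 + \<tau>\<^sup>2) = (s\<^sup>2 + (1 - q)\<^sup>2) / s" using assms by (simp add: \<tau>_def field_simps power2_eq_square)
    also have "\<dots> = (2 - 2 * q) / s" using q2 by (simp add: power2_eq_square algebra_simps)
    also have "\<dots> = 2 * \<tau>" by (simp add: \<tau>_def field_simps)
    finally show ?thesis .
  qed
  moreover have "1 + \<tau>\<^sup>2 > 0" using zero_le_power2[of \<tau>] by linarith
  ultimately have e1: "s = 2 * \<tau> / (1 + \<tau>\<^sup>2)" by (simp add: field_simps)
  have "s / \<tau> - 1 = s\<^sup>2 / (1 - q) - 1" using assms q1 by (simp add: \<tau>_def power2_eq_square)
  also have "\<dots> = (1 - q\<^sup>2) / (1 - q) - 1" using q2 by simp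
  also have "\<dots> = q" using q1 by (simp add: power2_eq_square field_simps)
  finally show ?thesis using t0 t1 e1 q_def by auto
qed


lemma rho_eq_aux:
  fixes A A' P P' Q Q' bx b2 :: real
  assumes "bx > 0" "b2 > 0" "P > 0" "Q > 0" "A \<ge> 0" "A' \<ge> 0"
    "A'\<^sup>2 = A\<^sup>2 / (bx * b2)" "P' = P / bx" "Q' = Q / b2"
  shows "A' / (sqrt P' * sqrt Q') = A / (sqrt P * sqrt Q)"
proof -
  have a: "A' = A / (sqrt bx * sqrt b2)"
  proof -
    have "A' = sqrt (A'\<^sup>2)" using assms(6) by simp
    also have "\<dots> = sqrt (A\<^sup>2) / sqrt (bx * b2)" unfolding assms(7) by (simp add: real_sqrt_divide)
    also have "\<dots> = A / (sqrt bx * sqrt b2)" using assms(5) by (simp add: real_sqrt_mult)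
    finally show ?thesis .
  qed
  have p: "sqrt P' = sqrt P / sqrt bx" unfolding assms(8) by (simp add: real_sqrt_divide)
  have q: "sqrt Q' = sqrt Q / sqrt b2" unfolding assms(9) by (simp add: real_sqrt_divide)
  have sp: "sqrt bx > 0" "sqrt b2 > 0" "sqrt P > 0" "sqrt Q > 0" using assms by auto
  show ?thesis unfolding a p q using sp by (simp add: field_simps)
qed

lemma scal2:
  fixes t :: real
  assumes t: "0 < t" "t < 1"
  shows "1 / t + (1 / t\<^sup>2 - 1) / (2 * t / (1 + t\<^sup>2) - 1 / t) = - t"
proof -
  have h1: "1 + t\<^sup>2 > 0" using zero_le_power2[of t] by linarith
  have t2: "t\<^sup>2 < 1" using t by (simp add: power_less_one_iff)
  have h2: "t\<^sup>2 - 1 \<noteq> 0" using t2 by simp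
  have d: "2 * t / (1 + t\<^sup>2) - 1 / t = (t\<^sup>2 - 1) / (t * (1 + t\<^sup>2))"
    using h1 t by (simp add: field_simps power2_eq_square)
  have n: "1 / t\<^sup>2 - 1 = - (t\<^sup>2 - 1) / t\<^sup>2" using t by (simp add: field_simps)
  have "(1 / t\<^sup>2 - 1) / (2 * t / (1 + t\<^sup>2) - 1 / t) = - (1 + t\<^sup>2) / t"
    unfolding d n using h1 h2 t by (simp add: field_simps power2_eq_square)
  then show ?thesis using t h1 by (simp add: field_simps power2_eq_square)
qed

theorem lemma6p2:
  fixes f :: "real \<Rightarrow> real"
  assumes "\<forall>t\<in>{0..<1}. f t \<ge> 0"
    and "f 0 = 1"
    and "is_metric_on (ball (0::'a::euclidean_space) 1) (rho_M f)"
  shows "(\<forall>g\<in>(GM_ball :: ('a option \<Rightarrow> 'a option) set). \<forall>x\<in>ball 0 1. \<forall>y\<in>ball 0 1.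
            rho_M f (the (g (Some x))) (the (g (Some y))) = rho_M f x y)
         \<longleftrightarrow> (\<forall>t\<in>{0..<1}. f t = sqrt (1 - t\<^sup>2))"
proof
  assume inv: "\<forall>g\<in>(GM_ball :: ('a option \<Rightarrow> 'a option) set). \<forall>x\<in>ball 0 1. \<forall>y\<in>ball 0 1.
            rho_M f (the (g (Some x))) (the (g (Some y))) = rho_M f x y"
  have nz: "f t \<noteq> 0" if t: "0 < t" "t < 1" for t
  proof
    assume ft: "f t = 0"
    obtain e :: 'a where e: "norm e = 1" using vector_choose_size[of 1] by auto
    have "t *\<^sub>R e \<in> ball 0 1" "(0::'a) \<in> ball 0 1" using t e by auto
    then have "rho_M f (t *\<^sub>R e) 0 = 0 \<longleftrightarrow> t *\<^sub>R e = 0"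
      using assms(3) unfolding is_metric_on_def by blast
    moreover have "rho_M f (t *\<^sub>R e) 0 = 0" using ft t e by (simp add: rho_M_def)
    ultimately show False using t e by auto
  qed
  show "\<forall>t\<in>{0..<1}. f t = sqrt (1 - t\<^sup>2)"
  proof
    fix s :: real assume s: "s \<in> {0..<1}"
    show "f s = sqrt (1 - s\<^sup>2)"
    proof (cases "s = 0")
      case True then show ?thesis using assms(2) by simp
    next
      case False
      then have s0: "0 < s" "s < 1" using s by auto
      obtain \<tau> where \<tau>: "0 < \<tau>" "\<tau> < 1" "s = 2 * \<tau> / (1 + \<tau>\<^sup>2)" "sqrt (1 - s\<^sup>2) = s / \<tau> - 1"
        using tau_exists[OF s0] by blast
      obtain e :: 'a where e: "norm e = 1" using vector_choose_size[of 1] by auto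
      have t2: "\<tau>\<^sup>2 < 1" using \<tau> by (simp add: power_less_one_iff)
      have it: "1 / \<tau>\<^sup>2 > 1" using t2 \<tau> by (simp add: field_simps)
      define r where "r = sqrt (1 / \<tau>\<^sup>2 - 1)"
      have r2: "r\<^sup>2 = 1 / \<tau>\<^sup>2 - 1" using it by (simp add: r_def)
      have r0: "r > 0" using it by (simp add: r_def)
      define c where "c = (1 / \<tau>) *\<^sub>R e"
      have cr: "(norm c)\<^sup>2 = 1 + r\<^sup>2" using e \<tau> r2 by (simp add: c_def power_divide)
      have gm: "sphere_inversion c r \<in> (GM_ball :: ('a option \<Rightarrow> 'a option) set)"
      proof -
        have "mobius (sphere_inversion c r \<circ> id)" by (rule mobius.mobius_inv[OF mobius.mobius_id r0])
        then show ?thesis unfolding GM_ball_def using si_ball[OF r0 cr] by simp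
      qed
      have it1: "1 / \<tau> > 1" using \<tau> by simp
      have g1: "sphere_inversion c r (Some (\<tau> *\<^sub>R e)) = Some 0"
      proof -
        have ne: "\<tau> \<noteq> 1 / \<tau>" using \<tau> it1 by linarith
        have "1 / \<tau> + r\<^sup>2 / (\<tau> - 1 / \<tau>) = 0" unfolding r2 using \<tau> t2
          by (simp add: field_simps power2_eq_square)
        then show ?thesis using si_line[OF e \<tau>(1) ne, of r] unfolding c_def by simp
      qed
      have g2: "sphere_inversion c r (Some (s *\<^sub>R e)) = Some ((- \<tau>) *\<^sub>R e)"
      proof -
        have ne: "s \<noteq> 1 / \<tau>" using s0 it1 by linarith
        have "1 / \<tau> + r\<^sup>2 / (s - 1 / \<tau>) = - \<tau>" unfolding r2 \<tau>(3) using scal2[OF \<tau>(1,2)] .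
        then show ?thesis using si_line[OF e \<tau>(1) ne, of r] unfolding c_def by simp
      qed
      have b1: "\<tau> *\<^sub>R e \<in> ball 0 1" "s *\<^sub>R e \<in> ball 0 1" using \<tau> s0 e by auto
      have eq: "rho_M f 0 ((- \<tau>) *\<^sub>R e) = rho_M f (\<tau> *\<^sub>R e) (s *\<^sub>R e)"
      proof -
        have "rho_M f (the (sphere_inversion c r (Some (\<tau> *\<^sub>R e)))) (the (sphere_inversion c r (Some (s *\<^sub>R e))))
            = rho_M f (\<tau> *\<^sub>R e) (s *\<^sub>R e)"
          using inv gm b1 by blast
        then show ?thesis unfolding g1 g2 by simp
      qed
      have st: "s - \<tau> > 0"
      proof -
        have h1: "1 + \<tau>\<^sup>2 > 0" using zero_le_power2[of \<tau>] by linarith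
        have "s - \<tau> = \<tau> * (1 - \<tau>\<^sup>2) / (1 + \<tau>\<^sup>2)" unfolding \<tau>(3) using h1
          by (simp add: field_simps)
        moreover have "\<tau> * (1 - \<tau>\<^sup>2) / (1 + \<tau>\<^sup>2) > 0"
          using \<tau> t2 h1 by (intro divide_pos_pos mult_pos_pos) auto
        ultimately show ?thesis by simp
      qed
      have n1: "norm (\<tau> *\<^sub>R e - s *\<^sub>R e) = s - \<tau>"
      proof -
        have "\<tau> *\<^sub>R e - s *\<^sub>R e = (\<tau> - s) *\<^sub>R e" by (simp add: scaleR_diff_left)
        then show ?thesis using e st by simp
      qed
      have "\<tau> / f \<tau> = (s - \<tau>) / (f \<tau> * f s)"
        using eq \<tau> s0 e assms(2) unfolding rho_M_def n1 by simp
      then have "\<tau> * f s = s - \<tau>" using nz[OF \<tau>(1,2)] nz[OF s0] by (simp add: field_simps)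
      then have "f s = s / \<tau> - 1" using \<tau>(1) by (simp add: field_simps)
      then show ?thesis using \<tau>(4) by simp
    qed
  qed
next
  assume F: "\<forall>t\<in>{0..<1}. f t = sqrt (1 - t\<^sup>2)"
  show "\<forall>g\<in>(GM_ball :: ('a option \<Rightarrow> 'a option) set). \<forall>x\<in>ball 0 1. \<forall>y\<in>ball 0 1.
            rho_M f (the (g (Some x))) (the (g (Some y))) = rho_M f x y"
  proof (intro ballI)
    fix g :: "'a option \<Rightarrow> 'a option" and x y :: 'a
    assume g: "g \<in> GM_ball" and x: "x \<in> ball 0 1" and y: "y \<in> ball 0 1"
    have mob: "mobius g" and img: "g ` (Some ` ball 0 1) = Some ` ball 0 1"
      using g unfolding GM_ball_def by auto
    obtain \<beta> where \<beta>: "\<forall>x. \<beta> x > 0" "\<forall>x x' y y'. g (Some x) = Some x' \<longrightarrow> g (Some y) = Some y' \<longrightarrow>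
       (norm (x' - y'))\<^sup>2 = (norm (x - y))\<^sup>2 / (\<beta> x * \<beta> y) \<and> 1 - (norm x')\<^sup>2 = (1 - (norm x)\<^sup>2) / \<beta> x"
      using good_ball[OF mobius_good[OF mob] img] by blast
    have "g (Some x) \<in> g ` (Some ` ball 0 1)" using x by simp
    then have "g (Some x) \<in> Some ` ball 0 1" unfolding img .
    then obtain x' where x': "g (Some x) = Some x'" "x' \<in> ball 0 1" by blast
    have "g (Some y) \<in> g ` (Some ` ball 0 1)" using y by simp
    then have "g (Some y) \<in> Some ` ball 0 1" unfolding img .
    then obtain y' where y': "g (Some y) = Some y'" "y' \<in> ball 0 1" by blast
    have h1: "(norm (x' - y'))\<^sup>2 = (norm (x - y))\<^sup>2 / (\<beta> x * \<beta> y)"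
      and h2: "1 - (norm x')\<^sup>2 = (1 - (norm x)\<^sup>2) / \<beta> x"
      using \<beta>(2) x'(1) y'(1) by blast+
    have h3: "1 - (norm y')\<^sup>2 = (1 - (norm y)\<^sup>2) / \<beta> y"
      using \<beta>(2) x'(1) y'(1) by blast
    have fn: "f (norm z) = sqrt (1 - (norm z)\<^sup>2)" if "z \<in> ball 0 1" for z :: 'a
      using F that by simp
    have pos: "1 - (norm z)\<^sup>2 > 0" if "z \<in> ball 0 1" for z :: 'a
      using sq_lt1[of z] that by simp
    have "rho_M f x' y' = rho_M f x y"
      unfolding rho_M_def fn[OF x] fn[OF y] fn[OF x'(2)] fn[OF y'(2)]
      by (rule rho_eq_aux[OF _ _ pos[OF x] pos[OF y] norm_ge_zero norm_ge_zero h1 h2 h3])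
         (use \<beta>(1) in auto)
    then show "rho_M f (the (g (Some x))) (the (g (Some y))) = rho_M f x y"
      using x'(1) y'(1) by simp
  qed
qed

end
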